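(* Let $n\ge4$. Then $\operatorname{zir}(C_n)=\operatorname{Z}(C_n)=\overline{\operatorname{Z}}(C_n)=2$ and $\operatorname{ZIR}(C_n)=\lfloor n/2\rfloor$.
   Context: $C_n$ is the cycle on $n$ vertices. Zero forcing: a blue vertex $u$ changes a white vertex $w$ to blue if $w$ is the only white neighbor of $u$; $B$ is a zero forcing set if from blue set $B$ eventually all vertices are blue; $\operatorname{Z}(G)$ is the minimum size of a zero forcing set and $\overline{\operatorname{Z}}(G)$ the maximum size of an inclusion-minimal zero forcing set. A nonempty $F\subseteq V(G)$ is a fort if every $v\notin F$ has $|N(v)\cap F|\ne1$. A private fort of $x\in S$ relative to $S$ is a fort $F$ with $S\cap F=\{x\}$; $S$ is a ZIr-set if every element of $S$ has a private fort. $\operatorname{zir}(G)$ / $\operatorname{ZIR}(G)$ are the minimum / maximum cardinality of an inclusion-maximal ZIr-set. *)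

theory Defs
  imports Main
begin

text \<open>A finite simple graph is given by a vertex set V and a symmetric irreflexive
adjacency relation E (only its restriction to V matters).\<close>

definition nbrs :: "'a set \<Rightarrow> ('a \<Rightarrow> 'a \<Rightarrow> bool) \<Rightarrow> 'a \<Rightarrow> 'a set" where
  "nbrs V E v = {u \<in> V. E v u}"

definition force_step :: "'a set \<Rightarrow> ('a \<Rightarrow> 'a \<Rightarrow> bool) \<Rightarrow> 'a set \<Rightarrow> 'a set" where
  "force_step V E S = S \<union> {w \<in> V. \<exists>u\<in>S. nbrs V E u - S = {w}}"

definition zf_closure :: "'a set \<Rightarrow> ('a \<Rightarrow> 'a \<Rightarrow> bool) \<Rightarrow> 'a set \<Rightarrow> 'a set" where
  "zf_closure V E B = (\<Union>k. (force_step V E ^^ k) B)"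

definition zero_forcing_set :: "'a set \<Rightarrow> ('a \<Rightarrow> 'a \<Rightarrow> bool) \<Rightarrow> 'a set \<Rightarrow> bool" where
  "zero_forcing_set V E B \<longleftrightarrow> B \<subseteq> V \<and> V \<subseteq> zf_closure V E B"

definition Z :: "'a set \<Rightarrow> ('a \<Rightarrow> 'a \<Rightarrow> bool) \<Rightarrow> nat" where
  "Z V E = Min {card B | B. zero_forcing_set V E B}"

definition minimal_zfs :: "'a set \<Rightarrow> ('a \<Rightarrow> 'a \<Rightarrow> bool) \<Rightarrow> 'a set \<Rightarrow> bool" where
  "minimal_zfs V E B \<longleftrightarrow> zero_forcing_set V E B \<and>
     (\<forall>B'. B' \<subset> B \<longrightarrow> \<not> zero_forcing_set V E B')"

definition Zbar :: "'a set \<Rightarrow> ('a \<Rightarrow> 'a \<Rightarrow> bool) \<Rightarrow> nat" where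
  "Zbar V E = Max {card B | B. minimal_zfs V E B}"

definition fort :: "'a set \<Rightarrow> ('a \<Rightarrow> 'a \<Rightarrow> bool) \<Rightarrow> 'a set \<Rightarrow> bool" where
  "fort V E F \<longleftrightarrow> F \<noteq> {} \<and> F \<subseteq> V \<and> (\<forall>v \<in> V - F. card (nbrs V E v \<inter> F) \<noteq> 1)"

definition private_fort :: "'a set \<Rightarrow> ('a \<Rightarrow> 'a \<Rightarrow> bool) \<Rightarrow> 'a set \<Rightarrow> 'a \<Rightarrow> 'a set \<Rightarrow> bool" where
  "private_fort V E S x F \<longleftrightarrow> fort V E F \<and> S \<inter> F = {x}"

definition ZIr_set :: "'a set \<Rightarrow> ('a \<Rightarrow> 'a \<Rightarrow> bool) \<Rightarrow> 'a set \<Rightarrow> bool" where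
  "ZIr_set V E S \<longleftrightarrow> S \<subseteq> V \<and> (\<forall>x\<in>S. \<exists>F. private_fort V E S x F)"

definition maximal_ZIr_set :: "'a set \<Rightarrow> ('a \<Rightarrow> 'a \<Rightarrow> bool) \<Rightarrow> 'a set \<Rightarrow> bool" where
  "maximal_ZIr_set V E S \<longleftrightarrow> ZIr_set V E S \<and>
     (\<forall>T. ZIr_set V E T \<and> S \<subseteq> T \<longrightarrow> T = S)"

definition zir :: "'a set \<Rightarrow> ('a \<Rightarrow> 'a \<Rightarrow> bool) \<Rightarrow> nat" where
  "zir V E = Min {card S | S. maximal_ZIr_set V E S}"

definition ZIR :: "'a set \<Rightarrow> ('a \<Rightarrow> 'a \<Rightarrow> bool) \<Rightarrow> nat" where
  "ZIR V E = Max {card S | S. maximal_ZIr_set V E S}"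

definition cycle_V :: "nat \<Rightarrow> nat set" where
  "cycle_V n = {0..<n}"

definition cycle_E :: "nat \<Rightarrow> nat \<Rightarrow> nat \<Rightarrow> bool" where
  "cycle_E n i j \<longleftrightarrow> i \<noteq> j \<and> (j = (i + 1) mod n \<or> i = (j + 1) mod n)"

end

theory Submission
  imports Defs
begin

lemma succ_ne: "2 \<le> (n::nat) \<Longrightarrow> v < n \<Longrightarrow> (v+1) mod n \<noteq> v"
  by (cases "v+1<n") (auto, metis One_nat_def Suc_lessI less_2_cases_iff mod_self not_less numeral_2_eq_2)

lemma predm: assumes "1 \<le> (n::nat)" "v < n" shows "(v+n-1) mod n = (if v = 0 then n-1 else v-1)"
proof (cases "v = 0")
  case True then show ?thesis using assms by simp
next
  case False note \<open>v < n\<close>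
  then have "v+n-1 = (v-1) + n" using False by simp
  then have "(v+n-1) mod n = (v-1) mod n" by (metis mod_add_self2)
  then show ?thesis using False \<open>v<n\<close> by simp
qed

lemma succm: "(u::nat) < n \<Longrightarrow> (u+1) mod n = (if u + 1 = n then 0 else u+1)"
  by auto

lemma pred_ne: "3 \<le> (n::nat) \<Longrightarrow> v < n \<Longrightarrow> (v+1) mod n \<noteq> (v+n-1) mod n"
  using predm[of n v] succm[of v n] by auto

lemma adj_iff: "1 \<le> (n::nat) \<Longrightarrow> u < n \<Longrightarrow> v < n \<Longrightarrow> (v = (u+1) mod n) \<longleftrightarrow> (u = (v+n-1) mod n)"
proof -
  assume a: "1 \<le> n" "u < n" "v < n"
  show ?thesis
  proof (cases "u + 1 = n")
    case True
    then have "(u+1) mod n = 0" by simp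
    then show ?thesis using predm[OF a(1) a(3)] True a by auto
  next
    case False
    then have "(u+1) mod n = u + 1" using a by simp
    then show ?thesis using predm[OF a(1) a(3)] False a by auto
  qed
qed

lemma pred_ne2: "2 \<le> (n::nat) \<Longrightarrow> v < n \<Longrightarrow> (v+n-1) mod n \<noteq> v"
  using predm[of n v] by auto

lemma nbrs_cyc: "3 \<le> n \<Longrightarrow> v < n \<Longrightarrow> nbrs (cycle_V n) (cycle_E n) v = {(v+1) mod n, (v+n-1) mod n}"
proof -
  assume a: "3 \<le> n" "v < n"
  have "nbrs (cycle_V n) (cycle_E n) v = {u. u < n \<and> v \<noteq> u \<and> (u = (v+1) mod n \<or> v = (u+1) mod n)}"
    unfolding nbrs_def cycle_V_def cycle_E_def by auto
  also have "\<dots> = {u. u < n \<and> v \<noteq> u \<and> (u = (v+1) mod n \<or> u = (v+n-1) mod n)}"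
  proof (rule Collect_cong)
    fix u show "(u < n \<and> v \<noteq> u \<and> (u = (v+1) mod n \<or> v = (u+1) mod n)) =
      (u < n \<and> v \<noteq> u \<and> (u = (v+1) mod n \<or> u = (v+n-1) mod n))"
      using adj_iff[of n u v] a by auto
  qed
  also have "\<dots> = {(v+1) mod n, (v+n-1) mod n}"
    using a succ_ne[of n v] pred_ne2[of n v] by (auto simp del: predm succm)
  finally show ?thesis .
qed

lemma fort_hard:
  assumes n: "3 \<le> n" and F: "fort (cycle_V n) (cycle_E n) F" and a: "a < n" "a \<notin> F" "(a+1) mod n \<notin> F"
  shows False
proof -
  from F have Fne: "F \<noteq> {}" and FV: "F \<subseteq> {0..<n}"
    and cond: "\<And>v. v \<in> {0..<n} - F \<Longrightarrow> card (nbrs (cycle_V n) (cycle_E n) v \<inter> F) \<noteq> 1"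
    unfolding fort_def cycle_V_def by auto
  obtain f where f: "f \<in> F" using Fne by auto
  have fn: "f < n" using f FV by auto
  have "(a + (f + n - a) mod n) mod n = (a + (f + n - a)) mod n" by (simp add: mod_add_right_eq)
  also have "a + (f + n - a) = f + n" using a by simp
  also have "(f + n) mod n = f" using fn by simp
  finally have P0: "(a + (f + n - a) mod n) mod n \<in> F" using f by simp
  define k where "k = (LEAST k. (a + k) mod n \<in> F)"
  have Pk: "(a + k) mod n \<in> F" unfolding k_def by (rule LeastI, rule P0)
  have Pless: "\<And>j. j < k \<Longrightarrow> (a + j) mod n \<notin> F" unfolding k_def using not_less_Least by blast
  have k0: "k \<noteq> 0"
  proof
    assume "k = 0" with Pk a show False by simp
  qed
  have k1: "k \<noteq> 1" using Pk a by auto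
  define w where "w = (a + (k-1)) mod n"
  have wn: "w < n" using n unfolding w_def by simp
  have wF: "w \<notin> F" unfolding w_def by (rule Pless) (use k0 in simp)
  have s1: "(w+1) mod n = (a+k) mod n"
  proof -
    have "(w+1) mod n = (a + (k-1) + 1) mod n" unfolding w_def by (rule mod_add_left_eq)
    also have "a + (k-1) + 1 = a + k" using k0 by simp
    finally show ?thesis .
  qed
  have "(w+n-1) mod n = (w + (n-1)) mod n" using n by simp
  also have "\<dots> = (a + (k-1) + (n-1)) mod n" unfolding w_def by (simp add: mod_add_left_eq)
  also have "a + (k-1) + (n-1) = (a + (k-2)) + n" using k0 k1 n by simp
  also have "((a + (k-2)) + n) mod n = (a + (k-2)) mod n" by simp
  finally have s2: "(w+n-1) mod n = (a + (k-2)) mod n" .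
  have notp: "(a + (k-2)) mod n \<notin> F" by (rule Pless) (use k0 in simp)
  have "nbrs (cycle_V n) (cycle_E n) w \<inter> F = {(a+k) mod n}"
    using nbrs_cyc[OF n wn] s1 s2 notp Pk by auto
  then have "card (nbrs (cycle_V n) (cycle_E n) w \<inter> F) = 1" by simp
  moreover have "w \<in> {0..<n} - F" using wn wF by simp
  ultimately show False using cond by blast
qed

lemma fort_easy:
  assumes n: "3 \<le> n" and FV: "F \<subseteq> {0..<n}" and Fne: "F \<noteq> {}"
    and c: "\<And>a. a < n \<Longrightarrow> a \<in> F \<or> (a+1) mod n \<in> F"
  shows "fort (cycle_V n) (cycle_E n) F"
  unfolding fort_def
proof (intro conjI ballI)
  show "F \<noteq> {}" by fact
  show "F \<subseteq> cycle_V n" using FV unfolding cycle_V_def .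
  fix v assume v: "v \<in> cycle_V n - F"
  then have vn: "v < n" and vF: "v \<notin> F" unfolding cycle_V_def by auto
  have s: "(v+1) mod n \<in> F" using c[OF vn] vF by auto
  define p where "p = (v+n-1) mod n"
  have pn: "p < n" unfolding p_def using n by simp
  have "v = (p+1) mod n" using adj_iff[of n p v] n pn vn unfolding p_def by simp
  then have pF: "p \<in> F" using c[OF pn] vF by auto
  have "nbrs (cycle_V n) (cycle_E n) v \<inter> F = {(v+1) mod n, p}"
    using nbrs_cyc[OF n vn] s pF unfolding p_def by auto
  moreover have "(v+1) mod n \<noteq> p" unfolding p_def using pred_ne[OF n vn] .
  ultimately show "card (nbrs (cycle_V n) (cycle_E n) v \<inter> F) \<noteq> 1" by simp
qed

definition pf :: "nat \<Rightarrow> nat set \<Rightarrow> bool" where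
  "pf n S \<longleftrightarrow> (\<forall>a\<in>S. (a+1) mod n \<notin> S)"

lemma ZIr_iff:
  assumes n: "3 \<le> n"
  shows "ZIr_set (cycle_V n) (cycle_E n) S \<longleftrightarrow> S \<subseteq> {0..<n} \<and> (\<forall>x\<in>S. pf n (S - {x}))"
proof
  assume Z: "ZIr_set (cycle_V n) (cycle_E n) S"
  then have SV: "S \<subseteq> {0..<n}" unfolding ZIr_set_def cycle_V_def by simp
  have "pf n (S - {x})" if x: "x \<in> S" for x
  proof -
    obtain F where F: "fort (cycle_V n) (cycle_E n) F" "S \<inter> F = {x}"
      using Z x unfolding ZIr_set_def private_fort_def by blast
    show ?thesis unfolding pf_def
    proof (intro ballI notI)
      fix a assume a: "a \<in> S - {x}" and b: "(a+1) mod n \<in> S - {x}"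
      have "a \<notin> F" "(a+1) mod n \<notin> F" using a b F(2) by auto
      moreover have "a < n" using a SV by auto
      ultimately show False using fort_hard[OF n F(1)] by blast
    qed
  qed
  then show "S \<subseteq> {0..<n} \<and> (\<forall>x\<in>S. pf n (S - {x}))" using SV by blast
next
  assume A: "S \<subseteq> {0..<n} \<and> (\<forall>x\<in>S. pf n (S - {x}))"
  show "ZIr_set (cycle_V n) (cycle_E n) S" unfolding ZIr_set_def
  proof (intro conjI ballI)
    show "S \<subseteq> cycle_V n" using A unfolding cycle_V_def by simp
    fix x assume x: "x \<in> S"
    define F where "F = {0..<n} - (S - {x})"
    have "fort (cycle_V n) (cycle_E n) F"
    proof (rule fort_easy[OF n])
      show "F \<subseteq> {0..<n}" unfolding F_def by auto
      show "F \<noteq> {}" using x A unfolding F_def by auto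
      fix a assume a: "a < n"
      have "(a+1) mod n < n" using n by simp
      then show "a \<in> F \<or> (a+1) mod n \<in> F" using A x a unfolding F_def pf_def by auto
    qed
    moreover have "S \<inter> F = {x}" using A x unfolding F_def by auto
    ultimately show "\<exists>F. private_fort (cycle_V n) (cycle_E n) S x F"
      unfolding private_fort_def by blast
  qed
qed


lemma fs_incl: "S \<subseteq> force_step V E S"
  unfolding force_step_def by auto

lemma no_pair_fix:
  assumes n: "3 \<le> n" and BV: "B \<subseteq> {0..<n}" and np: "pf n B"
  shows "force_step (cycle_V n) (cycle_E n) B = B"
proof -
  have "{w \<in> cycle_V n. \<exists>u\<in>B. nbrs (cycle_V n) (cycle_E n) u - B = {w}} = {}"
  proof (rule ccontr)
    assume "\<not> ?thesis"
    then obtain w u where u: "u \<in> B" and w: "nbrs (cycle_V n) (cycle_E n) u - B = {w}" by auto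
    have un: "u < n" using u BV by auto
    define p where "p = (u+n-1) mod n"
    have pn: "p < n" unfolding p_def using n by simp
    have "u = (p+1) mod n" using adj_iff[of n p u] n pn un unfolding p_def by simp
    then have pB: "p \<notin> B" using np u unfolding pf_def by auto
    have sB: "(u+1) mod n \<notin> B" using np u unfolding pf_def by auto
    have "nbrs (cycle_V n) (cycle_E n) u - B = {(u+1) mod n, p}"
      using nbrs_cyc[OF n un] pB sB unfolding p_def by auto
    moreover have "(u+1) mod n \<noteq> p" unfolding p_def using pred_ne[OF n un] .
    ultimately have "{(u+1) mod n, p} = {w}" "(u+1) mod n \<noteq> p" using w by simp_all
    then show False by (simp add: doubleton_eq_iff)
  qed
  then show ?thesis unfolding force_step_def by (simp only: Un_empty_right)
qed

lemma zfs_has_pair: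
  assumes n: "3 \<le> n" and Z: "zero_forcing_set (cycle_V n) (cycle_E n) B"
  shows "\<exists>a\<in>B. (a+1) mod n \<in> B"
proof (rule ccontr)
  assume "\<not> ?thesis"
  then have np: "pf n B" unfolding pf_def by auto
  have BV: "B \<subseteq> {0..<n}" using Z unfolding zero_forcing_set_def cycle_V_def by simp
  have "(force_step (cycle_V n) (cycle_E n) ^^ k) B = B" for k
    by (induction k) (simp_all add: no_pair_fix[OF n BV np])
  then have "zf_closure (cycle_V n) (cycle_E n) B = B" unfolding zf_closure_def by simp
  then have "{0..<n} \<subseteq> B" using Z unfolding zero_forcing_set_def cycle_V_def by simp
  then have "0 \<in> B" "(0+1) mod n \<in> B" using n by auto
  then show False using np unfolding pf_def by blast
qed

lemma pair_zfs:
  assumes n: "3 \<le> n" and a: "a < n"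
  shows "zero_forcing_set (cycle_V n) (cycle_E n) {a, (a+1) mod n}"
proof -
  let ?f = "force_step (cycle_V n) (cycle_E n)"
  let ?Init = "{a, (a+1) mod n}"
  have claim: "\<forall>j\<le>k+1. (a+j) mod n \<in> (?f ^^ k) ?Init" for k
  proof (induction k)
    case 0
    show ?case
    proof (intro allI impI)
      fix j :: nat assume "j \<le> 0 + 1"
      then have "j = 0 \<or> j = 1" by auto
      moreover have "(a+0) mod n = a" using a by simp
      ultimately show "(a+j) mod n \<in> (?f ^^ 0) ?Init" by auto
    qed
  next
    case (Suc k)
    let ?Tc = "(?f ^^ k) ?Init"
    have eq: "(?f ^^ Suc k) ?Init = ?f ?Tc" by (metis comp_apply funpow.simps(2))
    show ?case
    proof (intro allI impI)
      fix j assume j: "j \<le> Suc k + 1"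
      show "(a+j) mod n \<in> (?f ^^ Suc k) ?Init"
      proof (cases "j \<le> k + 1")
        case True
        then have "(a+j) mod n \<in> ?Tc" using Suc.IH by blast
        then show ?thesis using fs_incl[of ?Tc] eq by blast
      next
        case False
        then have jj: "j = k + 2" using j by simp
        define u where "u = (a + (k+1)) mod n"
        have uS: "u \<in> ?Tc" unfolding u_def using Suc.IH[rule_format, of "k+1"] by simp
        have un: "u < n" unfolding u_def using n by simp
        have s1: "(u+1) mod n = (a + (k+2)) mod n"
        proof -
          have "(u+1) mod n = (a + (k+1) + 1) mod n" unfolding u_def by (rule mod_add_left_eq)
          then show ?thesis by simp
        qed
        have "(u+n-1) mod n = (u + (n-1)) mod n" using n by simp
        also have "\<dots> = (a + (k+1) + (n-1)) mod n" unfolding u_def by (simp add: mod_add_left_eq)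
        also have "a + (k+1) + (n-1) = (a + k) + n" using n by simp
        also have "((a + k) + n) mod n = (a + k) mod n" by simp
        finally have s2: "(u+n-1) mod n = (a + k) mod n" .
        have pS: "(a+k) mod n \<in> ?Tc" using Suc.IH[rule_format, of k] by simp
        have nb: "nbrs (cycle_V n) (cycle_E n) u = {(a + (k+2)) mod n, (a+k) mod n}"
          using nbrs_cyc[OF n un] s1 s2 by simp
        show ?thesis
        proof (cases "(a + (k+2)) mod n \<in> ?Tc")
          case True
          then show ?thesis using fs_incl[of ?Tc] eq jj by (metis subsetD)
        next
          case False
          then have A: "nbrs (cycle_V n) (cycle_E n) u - ?Tc = {(a + (k+2)) mod n}"
            using nb pS by auto
          have B: "(a + (k+2)) mod n \<in> cycle_V n" unfolding cycle_V_def using n by simp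
          have "\<exists>u\<in>?Tc. nbrs (cycle_V n) (cycle_E n) u - ?Tc = {(a + (k+2)) mod n}"
            using A uS by (rule bexI)
          then have "(a + (k+2)) mod n \<in> {w \<in> cycle_V n. \<exists>u\<in>?Tc. nbrs (cycle_V n) (cycle_E n) u - ?Tc = {w}}"
            using B by (intro CollectI conjI)
          then have "(a + (k+2)) mod n \<in> ?f ?Tc"
            unfolding force_step_def by (rule UnI2)
          then show ?thesis using eq jj by simp
        qed
      qed
    qed
  qed
  show ?thesis unfolding zero_forcing_set_def
  proof
    show "?Init \<subseteq> cycle_V n" unfolding cycle_V_def using a n by simp
    show "cycle_V n \<subseteq> zf_closure (cycle_V n) (cycle_E n) ?Init"
    proof
      fix v assume "v \<in> cycle_V n"
      then have vn: "v < n" unfolding cycle_V_def by simp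
      define j where "j = (v + n - a) mod n"
      have "(a + j) mod n = (a + (v + n - a)) mod n" unfolding j_def by (rule mod_add_right_eq)
      also have "a + (v + n - a) = v + n" using a by simp
      finally have "(a + j) mod n = v" using vn by simp
      moreover have "(a+j) mod n \<in> (?f ^^ j) ?Init" using claim[of j] by simp
      ultimately have "v \<in> (?f ^^ j) ?Init" by simp
      then show "v \<in> zf_closure (cycle_V n) (cycle_E n) ?Init"
        unfolding zf_closure_def by (rule UN_I[OF UNIV_I])
    qed
  qed
qed


lemma zfs_card:
  assumes n: "3 \<le> n" and Z: "zero_forcing_set (cycle_V n) (cycle_E n) B"
  shows "2 \<le> card B"
proof -
  obtain a where a: "a \<in> B" "(a+1) mod n \<in> B" using zfs_has_pair[OF n Z] by blast
  have BV: "B \<subseteq> {0..<n}" using Z unfolding zero_forcing_set_def cycle_V_def by simp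
  then have fin: "finite B" using finite_subset by blast
  have an: "a < n" using a BV by auto
  have "card {a, (a+1) mod n} = 2" using succ_ne[of n a] n an by auto
  moreover have "card {a, (a+1) mod n} \<le> card B" using a fin by (intro card_mono) auto
  ultimately show ?thesis by simp
qed

lemma minimal_card:
  assumes n: "3 \<le> n" and M: "minimal_zfs (cycle_V n) (cycle_E n) B"
  shows "card B = 2"
proof -
  have Z: "zero_forcing_set (cycle_V n) (cycle_E n) B" using M unfolding minimal_zfs_def by simp
  obtain a where a: "a \<in> B" "(a+1) mod n \<in> B" using zfs_has_pair[OF n Z] by blast
  have BV: "B \<subseteq> {0..<n}" using Z unfolding zero_forcing_set_def cycle_V_def by simp
  have an: "a < n" using a BV by auto
  have P: "zero_forcing_set (cycle_V n) (cycle_E n) {a, (a+1) mod n}" by (rule pair_zfs[OF n an])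
  have "\<not> {a, (a+1) mod n} \<subset> B" using M P unfolding minimal_zfs_def by blast
  moreover have "{a, (a+1) mod n} \<subseteq> B" using a by simp
  ultimately have "B = {a, (a+1) mod n}" by blast
  then show ?thesis using succ_ne[of n a] n an by auto
qed

lemma minimal01:
  assumes n: "3 \<le> n"
  shows "minimal_zfs (cycle_V n) (cycle_E n) {0, 1}"
proof -
  have e: "(0+1) mod n = (1::nat)" using n by simp
  have Z: "zero_forcing_set (cycle_V n) (cycle_E n) {0, 1}" using pair_zfs[OF n, of 0] n e by simp
  have "\<not> zero_forcing_set (cycle_V n) (cycle_E n) B'" if B': "B' \<subset> {0,1}" for B'
  proof
    assume "zero_forcing_set (cycle_V n) (cycle_E n) B'"
    then have "2 \<le> card B'" by (rule zfs_card[OF n])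
    moreover have "card B' < card {0::nat,1}" using B' by (intro psubset_card_mono) auto
    ultimately show False by simp
  qed
  then show ?thesis unfolding minimal_zfs_def using Z by blast
qed

lemma finite_cards:
  assumes "\<And>S. P S \<Longrightarrow> S \<subseteq> {0..<(n::nat)}"
  shows "finite {card S | S. P S}"
proof (rule finite_subset)
  show "{card S | S. P S} \<subseteq> {..n}"
  proof
    fix c assume "c \<in> {card S | S. P S}"
    then obtain S where S: "c = card S" "P S" by blast
    have "card S \<le> card {0..<n}" using assms[OF S(2)] by (intro card_mono) auto
    then have "c \<le> card {0..<n}" using S by simp
    then show "c \<in> {..n}" by simp
  qed
qed simp

lemma Z_val:
  assumes n: "3 \<le> n"
  shows "Z (cycle_V n) (cycle_E n) = 2"
  unfolding Z_def
proof (rule Min_eqI)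
  show "finite {card B |B. zero_forcing_set (cycle_V n) (cycle_E n) B}"
    by (rule finite_cards[where n=n]) (simp add: zero_forcing_set_def cycle_V_def)
  show "\<And>y. y \<in> {card B |B. zero_forcing_set (cycle_V n) (cycle_E n) B} \<Longrightarrow> 2 \<le> y"
    using zfs_card[OF n] by blast
  have "zero_forcing_set (cycle_V n) (cycle_E n) {0,1}"
    using minimal01[OF n] unfolding minimal_zfs_def by simp
  moreover have "card {0::nat,1} = 2" by simp
  ultimately show "2 \<in> {card B |B. zero_forcing_set (cycle_V n) (cycle_E n) B}" by force
qed

lemma Zbar_val:
  assumes n: "3 \<le> n"
  shows "Zbar (cycle_V n) (cycle_E n) = 2"
proof -
  have "{card B |B. minimal_zfs (cycle_V n) (cycle_E n) B} = {2}"
  proof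
    show "{card B |B. minimal_zfs (cycle_V n) (cycle_E n) B} \<subseteq> {2}"
      using minimal_card[OF n] by blast
    have "card {0::nat,1} = 2" by simp
    then show "{2} \<subseteq> {card B |B. minimal_zfs (cycle_V n) (cycle_E n) B}"
      using minimal01[OF n] by force
  qed
  then show ?thesis unfolding Zbar_def by simp
qed


lemma pf_sub_single: "2 \<le> n \<Longrightarrow> w < n \<Longrightarrow> T \<subseteq> {w} \<Longrightarrow> pf n T"
  unfolding pf_def using succ_ne[of n w] by auto

lemma pf_mono: "pf n S \<Longrightarrow> T \<subseteq> S \<Longrightarrow> pf n T"
  unfolding pf_def by blast

lemma pair_ZIr:
  assumes n: "3 \<le> n" and xy: "x < n" "y < n"
  shows "ZIr_set (cycle_V n) (cycle_E n) {x, y}"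
proof -
  have "pf n ({x,y} - {z})" if z: "z \<in> {x,y}" for z
  proof (cases "z = x")
    case True
    then show ?thesis using n xy by (intro pf_sub_single[of n y]) auto
  next
    case False
    then have "z = y" using z by simp
    then show ?thesis using n xy by (intro pf_sub_single[of n x]) auto
  qed
  then show ?thesis using ZIr_iff[OF n] xy by simp
qed

lemma ZIr_big_pf:
  assumes n: "3 \<le> n" and Z: "ZIr_set (cycle_V n) (cycle_E n) S" and c: "3 \<le> card S"
  shows "pf n S"
  unfolding pf_def
proof (intro ballI notI)
  fix a assume a: "a \<in> S" and b: "(a+1) mod n \<in> S"
  have fin: "finite S" using c card.infinite by fastforce
  have "card (S - {a, (a+1) mod n}) \<ge> card S - card {a, (a+1) mod n}" by (rule diff_card_le_card_Diff) simp
  moreover have "card {a, (a+1) mod n} \<le> 2" by (auto simp: card_insert_if)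
  ultimately have "card (S - {a, (a+1) mod n}) > 0" using c by simp
  then obtain x where x: "x \<in> S - {a, (a+1) mod n}" by (metis card_0_eq card.infinite equals0I less_irrefl)
  have "pf n (S - {x})" using Z x ZIr_iff[OF n] by auto
  moreover have "a \<in> S - {x}" "(a+1) mod n \<in> S - {x}" using a b x by auto
  ultimately show False unfolding pf_def by blast
qed

lemma pf_card:
  assumes n: "3 \<le> n" and SV: "S \<subseteq> {0..<n}" and p: "pf n S"
  shows "2 * card S \<le> n"
proof -
  define f where "f = (\<lambda>a::nat. (a+1) mod n)"
  have inj: "inj_on f {0..<n}"
  proof
    fix a b assume "a \<in> {0..<n}" "b \<in> {0..<n}" "f a = f b"
    then show "a = b" unfolding f_def using succm[of a n] succm[of b n]
      by (auto split: if_splits)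
  qed
  have fin: "finite S" using SV finite_subset by blast
  have cf: "card (f ` S) = card S" using inj SV by (meson card_image inj_on_subset)
  have dis: "S \<inter> f ` S = {}" using p unfolding pf_def f_def by auto
  have sub: "S \<union> f ` S \<subseteq> {0..<n}" using SV n unfolding f_def by auto
  have "card (S \<union> f ` S) = card S + card (f ` S)" using fin dis by (simp add: card_Un_disjoint)
  moreover have "card (S \<union> f ` S) \<le> n" using card_mono[OF _ sub] by simp
  ultimately show ?thesis using cf by simp
qed

lemma maxZIr_ge2:
  assumes n: "3 \<le> n" and M: "maximal_ZIr_set (cycle_V n) (cycle_E n) S"
  shows "2 \<le> card S"
proof (rule ccontr)
  assume "\<not> 2 \<le> card S"
  then have c: "card S \<le> 1" by simp
  have Z: "ZIr_set (cycle_V n) (cycle_E n) S" and mx: "\<And>T. ZIr_set (cycle_V n) (cycle_E n) T \<Longrightarrow> S \<subseteq> T \<Longrightarrow> T = S"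
    using M unfolding maximal_ZIr_set_def by auto
  have SV: "S \<subseteq> {0..<n}" using Z ZIr_iff[OF n] by simp
  obtain x where x: "x < n" "S \<subseteq> {x}"
  proof (cases "S = {}")
    case True then show ?thesis using that[of 0] n by simp
  next
    case False
    then obtain x where "x \<in> S" by auto
    moreover have "finite S" using SV finite_subset by blast
    ultimately have "S = {x}" using c by (metis card_le_Suc0_iff_eq One_nat_def singleton_iff subsetI subset_antisym)
    then show ?thesis using that[of x] SV by auto
  qed
  have T: "ZIr_set (cycle_V n) (cycle_E n) {x, (x+1) mod n}" using pair_ZIr[OF n x(1)] n by simp
  have "{x, (x+1) mod n} = S" using mx[OF T] x(2) by auto
  moreover have "card {x, (x+1) mod n} = 2" using succ_ne[of n x] n x by auto
  ultimately show False using c by simp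
qed

lemma max01:
  assumes n: "3 \<le> n"
  shows "maximal_ZIr_set (cycle_V n) (cycle_E n) {0, 1}"
  unfolding maximal_ZIr_set_def
proof (intro conjI allI impI)
  show "ZIr_set (cycle_V n) (cycle_E n) {0, 1}" using pair_ZIr[OF n, of 0 1] n by simp
  fix T assume T: "ZIr_set (cycle_V n) (cycle_E n) T \<and> {0, 1} \<subseteq> T"
  show "T = {0, 1}"
  proof (rule ccontr)
    assume "T \<noteq> {0,1}"
    then obtain x where x: "x \<in> T" "x \<notin> {0,1}" using T by blast
    have "pf n (T - {x})" using T x ZIr_iff[OF n] by auto
    moreover have "0 \<in> T - {x}" "(0+1) mod n \<in> T - {x}" using T x n by auto
    ultimately show False unfolding pf_def by blast
  qed
qed

definition evens :: "nat \<Rightarrow> nat set" where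
  "evens n = {v. v < n \<and> even v \<and> v + 1 < n}"

lemma evens_img: "evens n = (\<lambda>j. 2*j) ` {..<n div 2}"
proof
  show "evens n \<subseteq> (\<lambda>j. 2*j) ` {..<n div 2}"
  proof
    fix v assume "v \<in> evens n"
    then have v: "v < n" "even v" "v+1 < n" unfolding evens_def by auto
    then obtain j where j: "v = 2*j" by (auto elim: evenE)
    then have "j < n div 2" using v by linarith
    then show "v \<in> (\<lambda>j. 2*j) ` {..<n div 2}" using j by auto
  qed
  show "(\<lambda>j. 2*j) ` {..<n div 2} \<subseteq> evens n"
  proof
    fix v assume "v \<in> (\<lambda>j. 2*j) ` {..<n div 2}"
    then obtain j where j: "j < n div 2" "v = 2*j" by auto
    then have "2*j+1 < n" by linarith
    then show "v \<in> evens n" unfolding evens_def using j by auto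
  qed
qed

lemma evens_card: "card (evens n) = n div 2"
  unfolding evens_img by (subst card_image) (auto simp: inj_on_def)

lemma evens_pf: "pf n (evens n)"
  unfolding pf_def evens_def by auto

lemma max_evens:
  assumes n: "4 \<le> n"
  shows "maximal_ZIr_set (cycle_V n) (cycle_E n) (evens n)"
  unfolding maximal_ZIr_set_def
proof (intro conjI allI impI)
  have n3: "3 \<le> n" using n by simp
  have EV: "evens n \<subseteq> {0..<n}" unfolding evens_def by auto
  show "ZIr_set (cycle_V n) (cycle_E n) (evens n)"
    using ZIr_iff[OF n3] EV pf_mono[OF evens_pf] by blast
  fix T assume T: "ZIr_set (cycle_V n) (cycle_E n) T \<and> evens n \<subseteq> T"
  show "T = evens n"
  proof (rule ccontr)
    assume ne: "T \<noteq> evens n"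
    then obtain v where v: "v \<in> T" "v \<notin> evens n" using T by blast
    have TV: "T \<subseteq> {0..<n}" using T ZIr_iff[OF n3] by simp
    then have fin: "finite T" using finite_subset by blast
    have "card (evens n) < card T" using T ne fin by (intro psubset_card_mono) auto
    moreover have "2 \<le> card (evens n)" unfolding evens_card using n by simp
    ultimately have "3 \<le> card T" by simp
    then have p: "pf n T" using ZIr_big_pf[OF n3] T by blast
    have vn: "v < n" using v TV by auto
    show False
    proof (cases "even v")
      case False
      then have v1: "v \<ge> 1" by (cases v) auto
      have "v - 1 \<in> evens n" unfolding evens_def using False v1 vn by auto
      then have "v - 1 \<in> T" using T by blast
      moreover have "(v - 1 + 1) mod n = v" using v1 vn by simp
      ultimately show False using p v(1) unfolding pf_def by metis
    next
      case True
      then have "v + 1 = n" using v vn unfolding evens_def by auto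
      then have "(v+1) mod n = 0" by simp
      moreover have "0 \<in> evens n" unfolding evens_def using n by auto
      moreover from this have "0 \<in> T" using T \<open>0 \<in> evens n\<close> by blast
      ultimately show False using p v(1) unfolding pf_def by metis
    qed
  qed
qed

lemma zir_val:
  assumes n: "3 \<le> n"
  shows "zir (cycle_V n) (cycle_E n) = 2"
  unfolding zir_def
proof (rule Min_eqI)
  show "finite {card S |S. maximal_ZIr_set (cycle_V n) (cycle_E n) S}"
    by (rule finite_cards[where n=n]) (use ZIr_iff[OF n] in \<open>simp add: maximal_ZIr_set_def\<close>)
  show "\<And>y. y \<in> {card S |S. maximal_ZIr_set (cycle_V n) (cycle_E n) S} \<Longrightarrow> 2 \<le> y"
    using maxZIr_ge2[OF n] by blast
  have "card {0::nat,1} = 2" by simp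
  then show "2 \<in> {card S |S. maximal_ZIr_set (cycle_V n) (cycle_E n) S}"
    using max01[OF n] by force
qed

lemma ZIR_val:
  assumes n: "4 \<le> n"
  shows "ZIR (cycle_V n) (cycle_E n) = n div 2"
  unfolding ZIR_def
proof (rule Max_eqI)
  have n3: "3 \<le> n" using n by simp
  show "finite {card S |S. maximal_ZIr_set (cycle_V n) (cycle_E n) S}"
    by (rule finite_cards[where n=n]) (use ZIr_iff[OF n3] in \<open>simp add: maximal_ZIr_set_def\<close>)
  show "y \<le> n div 2" if y: "y \<in> {card S |S. maximal_ZIr_set (cycle_V n) (cycle_E n) S}" for y
  proof -
    obtain S where S: "y = card S" "maximal_ZIr_set (cycle_V n) (cycle_E n) S" using y by blast
    have Z: "ZIr_set (cycle_V n) (cycle_E n) S" using S unfolding maximal_ZIr_set_def by simp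
    show ?thesis
    proof (cases "3 \<le> card S")
      case True
      then have "pf n S" using ZIr_big_pf[OF n3 Z] by simp
      then have "2 * card S \<le> n" using pf_card[OF n3] Z ZIr_iff[OF n3] by blast
      then show ?thesis using S by linarith
    next
      case False
      then show ?thesis using S n by linarith
    qed
  qed
  show "n div 2 \<in> {card S |S. maximal_ZIr_set (cycle_V n) (cycle_E n) S}"
    using max_evens[OF n] evens_card[of n] by force
qed

theorem proposition3p2:
  fixes n :: nat
  assumes "n \<ge> 4"
  shows "zir (cycle_V n) (cycle_E n) = 2 \<and> Z (cycle_V n) (cycle_E n) = 2 \<and>
         Zbar (cycle_V n) (cycle_E n) = 2 \<and> ZIR (cycle_V n) (cycle_E n) = n div 2"
proof -
  have n3: "3 \<le> n" using assms by simp
  show ?thesis using zir_val[OF n3] Z_val[OF n3] Zbar_val[OF n3] ZIR_val[OF assms] by simp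
qed

end
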